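(* Let $D$ be a finite group with $d=|D|\geq2$, and let $\overline{\Gamma}$ be the undirected graph whose vertices are the finitely supported functions $f:\Z\to D$, two vertices being adjacent iff they differ at exactly one point of $\Z$. Let $X$ be a finite subgraph of $\overline{\Gamma}$ with $V\ge1$ vertices. Then $X$ has at most $\frac{d-1}{2}V\log_d(V)$ edges, and equality holds only if $X$ is a $d$-ary hypercube, i.e. there exist a finite set $C\subset\Z$ and a finitely supported $h:\Z\to D$ such that $V(X)=\{g:g(x)=h(x)\ \forall x\notin C\}$ and $X$ contains every edge of $\overline{\Gamma}$ between vertices of $V(X)$.
   Context: A finitely supported function $f:\Z\to D$ is one with $\{x:f(x)\neq\mathrm{Id}_D\}$ finite. *)

theory Defs
  imports Complex_Main "HOL-Library.Cardinality"
begin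

text \<open>The finite group D is a type of class group_add (identity 0), finite.
  Vertices of Gamma-bar: finitely supported functions int => D.\<close>

definition fin_supp :: "(int \<Rightarrow> 'd::group_add) \<Rightarrow> bool" where
  "fin_supp f \<longleftrightarrow> finite {x. f x \<noteq> 0}"

definition gb_adj :: "(int \<Rightarrow> 'd) \<Rightarrow> (int \<Rightarrow> 'd) \<Rightarrow> bool" where
  "gb_adj f g \<longleftrightarrow> (\<exists>!x. f x \<noteq> g x)"

definition gb_edges_on :: "(int \<Rightarrow> 'd::group_add) set \<Rightarrow> (int \<Rightarrow> 'd) set set" where
  "gb_edges_on S = {{f, g} | f g. f \<in> S \<and> g \<in> S \<and> fin_supp f \<and> fin_supp g \<and> gb_adj f g}"

end

theory Submission
  imports Defs
begin


lemma ln_chord_strict: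
  fixes m D :: real
  assumes "1 < m" "m < D"
  shows "(m - 1) * ln D < (D - 1) * ln m"
proof (rule ccontr)
  assume neg: "\<not> ?thesis"
  define g where "g t = (D - 1) * ln t - (t - 1) * ln D" for t :: real
  define g' where "g' t = (D - 1) / t - ln D" for t :: real
  have gm: "g m \<le> 0" using neg by (simp add: g_def)
  have der: "DERIV g t :> g' t" if "0 < t" for t
    unfolding g_def g'_def using that
    by (auto intro!: derivative_eq_intros simp: field_simps)
  obtain z1 where z1: "1 < z1" "z1 < m" "g m - g 1 = (m - 1) * g' z1"
    using MVT2[OF assms(1), of g g'] der by auto
  obtain z2 where z2: "m < z2" "z2 < D" "g D - g m = (D - m) * g' z2"
    using MVT2[OF assms(2), of g g'] der assms by auto
  have "g 1 = 0" "g D = 0" by (simp_all add: g_def)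
  then have "g' z1 \<le> 0" using z1 gm assms
    by (metis diff_gt_0_iff_gt diff_zero mult_pos_pos not_le)
  moreover have "g' z2 \<ge> 0" using z2 gm assms \<open>g D = 0\<close>
    by (smt (verit) mult_less_0_iff)
  moreover have "(D - 1) / z2 < (D - 1) / z1"
    using z1 z2 assms by (intro divide_strict_left_mono) auto
  ultimately show False unfolding g'_def by linarith
qed

lemma ln_chord:
  fixes m D :: real
  assumes "1 \<le> m" "m \<le> D"
  shows "(m - 1) * ln D \<le> (D - 1) * ln m"
  using ln_chord_strict[of m D] assms
  by (cases "m = 1"; cases "m = D") auto

lemma ln_ge_one_minus_inv_eq:
  fixes y :: real
  assumes "0 < y" "ln y = 1 - 1 / y"
  shows "y = 1"
proof -
  have "ln (1/y) = 1/y - 1" using assms by (simp add: ln_div)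
  then have "1/y = 1" using ln_eq_minus_one[of "1/y"] assms by simp
  then show ?thesis by simp
qed

lemma ln_ge_one_minus_inv:
  fixes y :: real
  assumes "0 < y"
  shows "1 - 1 / y \<le> ln y"
proof -
  have "ln (1/y) \<le> 1/y - 1" using assms ln_le_minus_one[of "1/y"] by simp
  then show ?thesis using assms by (simp add: ln_div)
qed


lemma edge_dest:
  assumes "e \<in> gb_edges_on S"
  obtains u v where "e = {u, v}" "u \<in> S" "v \<in> S" "u \<noteq> v" "\<exists>!z. u z \<noteq> v z"
    "fin_supp u" "fin_supp v"
proof -
  from assms obtain u v where *: "e = {u, v}" "u \<in> S" "v \<in> S" "fin_supp u" "fin_supp v" "gb_adj u v"
    unfolding gb_edges_on_def by blast
  then have "\<exists>!z. u z \<noteq> v z" by (simp add: gb_adj_def)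
  then have "u \<noteq> v" by auto
  with * \<open>\<exists>!z. u z \<noteq> v z\<close> that show ?thesis by blast
qed

lemma edges_sub_Pow: "gb_edges_on S \<subseteq> Pow S"
  unfolding gb_edges_on_def by auto

lemma edges_card2: "e \<in> gb_edges_on S \<Longrightarrow> card e = 2"
  by (erule edge_dest) auto

lemma edges_mono_sub:
  assumes "E \<subseteq> gb_edges_on S" "T \<subseteq> S"
  shows "{e \<in> E. e \<subseteq> T} \<subseteq> gb_edges_on T"
proof
  fix e assume "e \<in> {e \<in> E. e \<subseteq> T}"
  then have "e \<in> gb_edges_on S" "e \<subseteq> T" using assms by auto
  then show "e \<in> gb_edges_on T" unfolding gb_edges_on_def by auto
qed


lemma main_ind:
  fixes S :: "(int \<Rightarrow> 'd::{finite,group_add}) set" and E :: "(int \<Rightarrow> 'd) set set" and K :: real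
  assumes d2: "CARD('d) \<ge> 2" and K: "K = (real CARD('d) - 1) / (2 * ln (real CARD('d)))"
  shows "finite S \<Longrightarrow> card S \<ge> 1 \<Longrightarrow> E \<subseteq> gb_edges_on S \<Longrightarrow>
    real (card E) \<le> K * real (card S) * ln (real (card S)) \<and>
    (real (card E) = K * real (card S) * ln (real (card S)) \<longrightarrow>
      (\<exists>C h. finite C \<and> h \<in> S \<and> S = {g. \<forall>y. y \<notin> C \<longrightarrow> g y = h y} \<and> gb_edges_on S \<subseteq> E))"
proof (induction "card S" arbitrary: S E rule: less_induct)
  case (less S E)
  have finS: "finite S" and cS: "1 \<le> card S" and ES: "E \<subseteq> gb_edges_on S" using less.prems by auto
  have finE: "finite E" using ES edges_sub_Pow[of S] finS
    by (meson finite_Pow_iff finite_subset subset_trans)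
  have lnD: "ln (real CARD('d)) > 0" using d2 by simp
  have Kpos: "K > 0" unfolding K using d2 lnD by (simp add: field_simps)
  show ?case
  proof (cases "\<exists>f0\<in>S. \<exists>g0\<in>S. f0 \<noteq> g0")
    case False
    from cS have "S \<noteq> {}" by auto
    then obtain h where "h \<in> S" by auto
    with False have Sh: "S = {h}" by auto
    have "gb_edges_on S = {}"
    proof (rule ccontr)
      assume "gb_edges_on S \<noteq> {}"
      then obtain e where "e \<in> gb_edges_on S" by auto
      then show False by (rule edge_dest) (use Sh in auto)
    qed
    with ES have E0: "E = {}" by auto
    show ?thesis
    proof
      show "real (card E) \<le> K * real (card S) * ln (real (card S))" using E0 Sh by simp
      show "real (card E) = K * real (card S) * ln (real (card S)) \<longrightarrow>
        (\<exists>C h. finite C \<and> h \<in> S \<and> S = {g. \<forall>y. y \<notin> C \<longrightarrow> g y = h y} \<and> gb_edges_on S \<subseteq> E)"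
        using \<open>gb_edges_on S = {}\<close> Sh
        by (intro impI exI[of _ "{}"] exI[of _ h]) auto
    qed
  next
    case True
    then obtain f0 g0 x where f0: "f0 \<in> S" "g0 \<in> S" "f0 x \<noteq> g0 x"
      by (metis ext)
    define A where "A a = {f\<in>S. f x = a}" for a
    define line where "line f = {g\<in>S. \<forall>y. y \<noteq> x \<longrightarrow> g y = f y}" for f
    define \<alpha> where "\<alpha> f = card (A (f x))" for f
    define \<beta> where "\<beta> f = card (line f)" for f
    define Ea where "Ea a = {e\<in>E. e \<subseteq> A a}" for a
    define Ec where "Ec = {e\<in>E. \<forall>a. \<not> e \<subseteq> A a}"
    define n where "n = card S"
    define D where "D = real CARD('d)"
    have AS: "A a \<subseteq> S" for a by (auto simp: A_def)
    have finA: "finite (A a)" for a using AS finS finite_subset by blast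
    have cA: "card (A a) < card S" for a
    proof -
      have "A a \<noteq> S" using f0 unfolding A_def by (metis (mono_tags, lifting) mem_Collect_eq)
      then show ?thesis using AS finS by (meson psubsetI psubset_card_mono)
    qed
    have Ea_sub: "Ea a \<subseteq> gb_edges_on (A a)" for a
      using edges_mono_sub[OF ES AS] by (simp add: Ea_def)
    have IH: "real (card (Ea a)) \<le> K * real (card (A a)) * ln (real (card (A a))) \<and>
      (real (card (Ea a)) = K * real (card (A a)) * ln (real (card (A a))) \<longrightarrow>
      (\<exists>C h. finite C \<and> h \<in> A a \<and> A a = {g. \<forall>y. y \<notin> C \<longrightarrow> g y = h y} \<and> gb_edges_on (A a) \<subseteq> Ea a))"
      if "1 \<le> card (A a)" for a
      using less.hyps[OF cA finA that Ea_sub] .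
    have G1: "real (card (Ea a)) \<le> K * real (card (A a)) * ln (real (card (A a)))" for a
    proof (cases "card (A a) = 0")
      case True
      then have "A a = {}" using finA by simp
      have "Ea a = {}"
      proof (rule ccontr)
        assume "Ea a \<noteq> {}"
        then obtain e where "e \<in> Ea a" by auto
        then have "e \<in> gb_edges_on S" "e \<subseteq> A a" using ES by (auto simp: Ea_def)
        then show False using \<open>A a = {}\<close> edges_card2[of e S] by auto
      qed
      then show ?thesis using True by simp
    next
      case False
      then show ?thesis using IH[of a] by simp
    qed
    have finEa: "finite (Ea a)" for a using finE by (simp add: Ea_def)
    have finEc: "finite Ec" using finE by (simp add: Ec_def)
    have I1: "card E \<le> (\<Sum>a\<in>UNIV. card (Ea a)) + card Ec"
    proof -
      have "E \<subseteq> (\<Union>a\<in>UNIV. Ea a) \<union> Ec" by (auto simp: Ea_def Ec_def)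
      then have "card E \<le> card ((\<Union>a\<in>UNIV. Ea a) \<union> Ec)"
        using finEa finEc by (intro card_mono) auto
      also have "\<dots> \<le> card (\<Union>a\<in>UNIV. Ea a) + card Ec" by (rule card_Un_le)
      also have "\<dots> \<le> (\<Sum>a\<in>UNIV. card (Ea a)) + card Ec"
        using card_UN_le[of UNIV Ea] by simp
      finally show ?thesis .
    qed
    have G3: "(\<Sum>a\<in>UNIV. K * real (card (A a)) * ln (real (card (A a)))) = K * (\<Sum>f\<in>S. ln (real (\<alpha> f)))"
    proof -
      have "(\<Sum>f\<in>S. ln (real (\<alpha> f))) = (\<Sum>a\<in>UNIV. \<Sum>f\<in>{f\<in>S. f x = a}. ln (real (\<alpha> f)))"
        by (rule sum.group[symmetric]) (use finS in auto)
      also have "\<dots> = (\<Sum>a\<in>UNIV. real (card (A a)) * ln (real (card (A a))))"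
      proof (rule sum.cong[OF refl])
        fix a :: 'd
        have "(\<Sum>f\<in>{f\<in>S. f x = a}. ln (real (\<alpha> f))) = (\<Sum>f\<in>A a. ln (real (card (A a))))"
          by (rule sum.cong) (auto simp: A_def \<alpha>_def)
        then show "(\<Sum>f\<in>{f\<in>S. f x = a}. ln (real (\<alpha> f))) = real (card (A a)) * ln (real (card (A a)))"
          by simp
      qed
      finally show ?thesis by (simp add: sum_distrib_left mult.assoc)
    qed
    have linef: "f \<in> line f" if "f \<in> S" for f using that by (simp add: line_def)
    have lineS: "line f \<subseteq> S" for f by (auto simp: line_def)
    have finline: "finite (line f)" for f using lineS finS finite_subset by blast
    have line_range: "line f \<subseteq> range (\<lambda>a. f(x := a))" for f
    proof
      fix g assume "g \<in> line f"
      then have "g = f(x := g x)" by (auto simp: line_def)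
      then show "g \<in> range (\<lambda>a. f(x := a))" by blast
    qed
    have G5: "{e\<in>Ec. f\<in>e} \<subseteq> (\<lambda>g. {f, g}) ` (line f - {f})" if "f \<in> S" for f
    proof
      fix e assume "e \<in> {e\<in>Ec. f\<in>e}"
      then have eE: "e \<in> gb_edges_on S" and nA: "\<forall>a. \<not> e \<subseteq> A a" and fe: "f \<in> e"
        using ES by (auto simp: Ec_def)
      obtain u v where uv: "e = {u, v}" "u \<in> S" "v \<in> S" "u \<noteq> v" "\<exists>!z. u z \<noteq> v z"
        using eE by (rule edge_dest) blast
      have uvx: "u x \<noteq> v x"
      proof
        assume "u x = v x"
        then have "e \<subseteq> A (u x)" using uv by (auto simp: A_def)
        then show False using nA by blast
      qed
      have agree: "\<forall>y. y \<noteq> x \<longrightarrow> u y = v y" using uv(5) uvx by blast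
      show "e \<in> (\<lambda>g. {f, g}) ` (line f - {f})"
      proof (cases "f = u")
        case True
        then have "v \<in> line f - {f}" using uv agree by (auto simp: line_def)
        then show ?thesis using True uv by blast
      next
        case False
        then have "f = v" using fe uv by auto
        then have "u \<in> line f - {f}" using uv agree by (auto simp: line_def)
        then show ?thesis using \<open>f = v\<close> uv by (auto simp: insert_commute)
      qed
    qed
    have G6: "1 \<le> \<beta> f \<and> \<beta> f \<le> CARD('d)" if "f \<in> S" for f
    proof
      show "1 \<le> \<beta> f" unfolding \<beta>_def using linef[OF that] finline
        by (metis One_nat_def Suc_leI card_gt_0_iff empty_iff)
      have "card (line f) \<le> card (range (\<lambda>a. f(x := a)))"
        by (intro card_mono line_range) auto
      also have "\<dots> \<le> CARD('d)" by (rule card_image_le) simp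
      finally show "\<beta> f \<le> CARD('d)" by (simp add: \<beta>_def)
    qed
    have G5': "card {e\<in>Ec. f\<in>e} \<le> \<beta> f - 1" if "f \<in> S" for f
    proof -
      have "card {e\<in>Ec. f\<in>e} \<le> card ((\<lambda>g. {f, g}) ` (line f - {f}))"
        using G5[OF that] finline by (intro card_mono) auto
      also have "\<dots> \<le> card (line f - {f})" by (rule card_image_le) (use finline in auto)
      also have "\<dots> = \<beta> f - 1" using linef[OF that] finline by (simp add: \<beta>_def)
      finally show ?thesis .
    qed
    have G4: "2 * card Ec = (\<Sum>f\<in>S. card {e\<in>Ec. f\<in>e})"
    proof -
      have "(\<Sum>f\<in>S. card {e\<in>Ec. f\<in>e}) = (\<Sum>f\<in>S. \<Sum>e\<in>Ec. if f \<in> e then 1 else 0)"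
        using finEc by (simp add: sum.inter_filter[symmetric])
      also have "\<dots> = (\<Sum>e\<in>Ec. \<Sum>f\<in>S. if f \<in> e then 1 else 0)" by (rule sum.swap)
      also have "\<dots> = (\<Sum>e\<in>Ec. 2)"
      proof (rule sum.cong[OF refl])
        fix e assume "e \<in> Ec"
        then have "e \<in> gb_edges_on S" using ES by (auto simp: Ec_def)
        then have "e \<subseteq> S" "card e = 2" using edges_sub_Pow[of S] edges_card2 by auto
        then have "{f\<in>S. f \<in> e} = e" by auto
        then show "(\<Sum>f\<in>S. if f \<in> e then 1 else 0) = (2::nat)"
          using finS \<open>card e = 2\<close> by (simp add: sum.inter_filter[symmetric])
      qed
      finally show ?thesis by simp
    qed
    have K2: "2 * K * t = (D - 1) * t / ln D" for t unfolding K D_def using lnD by (simp add: field_simps)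
    have G7: "real (\<beta> f) - 1 \<le> 2 * K * ln (real (\<beta> f))" if "f \<in> S" for f
    proof -
      have "(real (\<beta> f) - 1) * ln D \<le> (D - 1) * ln (real (\<beta> f))"
        using ln_chord[of "real (\<beta> f)" D] G6[OF that] unfolding D_def by simp
      then have "real (\<beta> f) - 1 \<le> (D - 1) * ln (real (\<beta> f)) / ln D"
        using lnD unfolding D_def by (simp add: field_simps)
      then show ?thesis by (simp add: K2)
    qed
    have G7eq: "\<beta> f = 1 \<or> \<beta> f = CARD('d)" if "f \<in> S" "real (\<beta> f) - 1 = 2 * K * ln (real (\<beta> f))" for f
    proof (rule ccontr)
      assume "\<not> ?thesis"
      then have "1 < real (\<beta> f)" "real (\<beta> f) < D" using G6[OF that(1)] unfolding D_def by auto
      then have "(real (\<beta> f) - 1) * ln D < (D - 1) * ln (real (\<beta> f))" by (rule ln_chord_strict)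
      then have "real (\<beta> f) - 1 < (D - 1) * ln (real (\<beta> f)) / ln D"
        using lnD unfolding D_def by (simp add: field_simps)
      then show False using that(2) by (simp add: K2)
    qed
    have \<alpha>1: "1 \<le> \<alpha> f" if "f \<in> S" for f
    proof -
      have "f \<in> A (f x)" using that by (simp add: A_def)
      then show ?thesis unfolding \<alpha>_def using finA
        by (metis One_nat_def Suc_leI card_gt_0_iff empty_iff)
    qed
    have npos: "real n > 0" using cS by (simp add: n_def)
    have Sab: "(\<Sum>f\<in>S. real (\<alpha> f) * real (\<beta> f)) \<le> real n * real n"
    proof -
      have "(\<Sum>f\<in>S. \<alpha> f * \<beta> f) = card (SIGMA f:S. A (f x) \<times> line f)"
        using finS finA finline by (simp add: card_SigmaI \<alpha>_def \<beta>_def card_cartesian_product)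
      also have "\<dots> \<le> card (S \<times> S)"
      proof (rule card_inj_on_le[of snd])
        show "inj_on snd (SIGMA f:S. A (f x) \<times> line f)"
        proof (rule inj_onI)
          fix p q assume p: "p \<in> (SIGMA f:S. A (f x) \<times> line f)" and q: "q \<in> (SIGMA f:S. A (f x) \<times> line f)"
            and pq: "snd p = snd q"
          obtain f g h where "p = (f, g, h)" by (cases p) auto
          moreover obtain f' g' h' where "q = (f', g', h')" by (cases q) auto
          ultimately have "f x = f' x" "\<forall>y. y \<noteq> x \<longrightarrow> f y = f' y" "g = g'" "h = h'"
            using p q pq by (auto simp: A_def line_def)
          then have "f = f'" by (metis ext)
          then show "p = q" using \<open>p = (f, g, h)\<close> \<open>q = (f', g', h')\<close> \<open>g = g'\<close> \<open>h = h'\<close> by simp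
        qed
        show "snd ` (SIGMA f:S. A (f x) \<times> line f) \<subseteq> S \<times> S" using AS lineS by (fastforce simp: subset_iff)
        show "finite (S \<times> S)" using finS by simp
      qed
      also have "\<dots> = n * n" by (simp add: n_def card_cartesian_product)
      finally have "(\<Sum>f\<in>S. \<alpha> f * \<beta> f) \<le> n * n" .
      then have "real (\<Sum>f\<in>S. \<alpha> f * \<beta> f) \<le> real (n * n)" by (rule of_nat_mono)
      then show ?thesis by simp
    qed
    have tf: "1 - real (\<alpha> f) * real (\<beta> f) / real n \<le> ln (real n) - (ln (real (\<alpha> f)) + ln (real (\<beta> f)))"
      if "f \<in> S" for f
    proof -
      have pa: "real (\<alpha> f) > 0" and pb: "real (\<beta> f) > 0" using \<alpha>1[OF that] G6[OF that] by auto
      have "1 - 1 / (real n / (real (\<alpha> f) * real (\<beta> f))) \<le> ln (real n / (real (\<alpha> f) * real (\<beta> f)))"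
        using npos pa pb by (intro ln_ge_one_minus_inv) simp
      then show ?thesis using npos pa pb by (simp add: ln_div ln_mult)
    qed
    have tsum: "(\<Sum>f\<in>S. 1 - real (\<alpha> f) * real (\<beta> f) / real n) \<ge> 0"
    proof -
      have "(\<Sum>f\<in>S. 1 - real (\<alpha> f) * real (\<beta> f) / real n) = real n - (\<Sum>f\<in>S. real (\<alpha> f) * real (\<beta> f)) / real n"
        by (simp add: sum_subtractf sum_divide_distrib n_def)
      moreover have "(\<Sum>f\<in>S. real (\<alpha> f) * real (\<beta> f)) / real n \<le> real n"
        using Sab npos by (simp add: divide_le_eq)
      ultimately show ?thesis by simp
    qed
    have Gibbs: "(\<Sum>f\<in>S. ln (real (\<alpha> f)) + ln (real (\<beta> f))) \<le> real n * ln (real n)"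
    proof -
      have "0 \<le> (\<Sum>f\<in>S. ln (real n) - (ln (real (\<alpha> f)) + ln (real (\<beta> f))))"
      proof -
        have "(\<Sum>f\<in>S. 1 - real (\<alpha> f) * real (\<beta> f) / real n) \<le> (\<Sum>f\<in>S. ln (real n) - (ln (real (\<alpha> f)) + ln (real (\<beta> f))))"
          by (rule sum_mono) (rule tf)
        then show ?thesis using tsum by linarith
      qed
      then show ?thesis by (simp add: sum_subtractf n_def)
    qed
    have cEc: "real (card Ec) = (\<Sum>f\<in>S. real (card {e\<in>Ec. f\<in>e})) / 2"
    proof -
      have "real (2 * card Ec) = real (\<Sum>f\<in>S. card {e\<in>Ec. f\<in>e})" using G4 by simp
      then show ?thesis by (simp add: of_nat_sum)
    qed
    have s2le: "real (card {e\<in>Ec. f\<in>e}) \<le> real (\<beta> f) - 1" if "f \<in> S" for f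
    proof -
      have "real (card {e\<in>Ec. f\<in>e}) \<le> real (\<beta> f - 1)" using G5'[OF that] by (rule of_nat_mono)
      then show ?thesis using G6[OF that] by (simp add: of_nat_diff)
    qed
    have s2t2: "(\<Sum>f\<in>S. real (card {e\<in>Ec. f\<in>e})) \<le> (\<Sum>f\<in>S. real (\<beta> f) - 1)"
      by (rule sum_mono) (rule s2le)
    have t2u2: "(\<Sum>f\<in>S. real (\<beta> f) - 1) \<le> (\<Sum>f\<in>S. 2 * K * ln (real (\<beta> f)))"
      by (rule sum_mono) (rule G7)
    have u2: "(\<Sum>f\<in>S. 2 * K * ln (real (\<beta> f))) = 2 * K * (\<Sum>f\<in>S. ln (real (\<beta> f)))"
      by (simp add: sum_distrib_left)
    have s1t1: "(\<Sum>a\<in>UNIV. real (card (Ea a))) \<le> (\<Sum>a\<in>UNIV. K * real (card (A a)) * ln (real (card (A a))))"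
      by (rule sum_mono) (rule G1)
    have cE: "real (card E) \<le> (\<Sum>a\<in>UNIV. real (card (Ea a))) + real (card Ec)"
    proof -
      have "real (card E) \<le> real ((\<Sum>a\<in>UNIV. card (Ea a)) + card Ec)" using I1 by (rule of_nat_mono)
      then show ?thesis by (simp add: of_nat_sum)
    qed
    have s3: "(\<Sum>f\<in>S. ln (real (\<alpha> f)) + ln (real (\<beta> f))) = (\<Sum>f\<in>S. ln (real (\<alpha> f))) + (\<Sum>f\<in>S. ln (real (\<beta> f)))"
      by (rule sum.distrib)
    have KG: "K * (\<Sum>f\<in>S. ln (real (\<alpha> f)) + ln (real (\<beta> f))) \<le> K * real n * ln (real n)"
      using mult_left_mono[OF Gibbs, of K] Kpos by (simp add: mult.assoc)
    have bound: "real (card E) \<le> K * real n * ln (real n)"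
      using cE s1t1 G3 cEc s2t2 t2u2 u2 s3 KG by ((simp add: algebra_simps)?; linarith?)
    show ?thesis
    proof
      show "real (card E) \<le> K * real (card S) * ln (real (card S))" using bound by (simp add: n_def)
      show "real (card E) = K * real (card S) * ln (real (card S)) \<longrightarrow>
        (\<exists>C h. finite C \<and> h \<in> S \<and> S = {g. \<forall>y. y \<notin> C \<longrightarrow> g y = h y} \<and> gb_edges_on S \<subseteq> E)"
      proof
        assume eq0: "real (card E) = K * real (card S) * ln (real (card S))"
        then have eq: "real (card E) = K * real n * ln (real n)" by (simp add: n_def)
        have e1: "(\<Sum>a\<in>UNIV. real (card (Ea a))) = (\<Sum>a\<in>UNIV. K * real (card (A a)) * ln (real (card (A a))))"
          using eq cE s1t1 G3 cEc s2t2 t2u2 u2 s3 KG by ((simp add: algebra_simps)?; linarith?)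
        have e2: "(\<Sum>f\<in>S. real (card {e\<in>Ec. f\<in>e})) = (\<Sum>f\<in>S. real (\<beta> f) - 1)"
          using eq cE s1t1 G3 cEc s2t2 t2u2 u2 s3 KG by ((simp add: algebra_simps)?; linarith?)
        have e3: "(\<Sum>f\<in>S. real (\<beta> f) - 1) = (\<Sum>f\<in>S. 2 * K * ln (real (\<beta> f)))"
          using eq cE s1t1 G3 cEc s2t2 t2u2 u2 s3 KG by ((simp add: algebra_simps)?; linarith?)
        have e4': "K * (\<Sum>f\<in>S. ln (real (\<alpha> f)) + ln (real (\<beta> f))) = K * (real n * ln (real n))"
          using eq cE s1t1 G3 cEc s2t2 t2u2 u2 s3 KG by ((simp add: algebra_simps)?; linarith?)
        then have e4: "(\<Sum>f\<in>S. ln (real (\<alpha> f)) + ln (real (\<beta> f))) = real n * ln (real n)"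
          using Kpos by simp
        have Eaeq: "real (card (Ea a)) = K * real (card (A a)) * ln (real (card (A a)))" for a
          by (rule sum_mono_inv[OF e1]) (auto intro: G1)
        have Eceq: "real (card {e\<in>Ec. f\<in>e}) = real (\<beta> f) - 1" if "f \<in> S" for f
          by (rule sum_mono_inv[OF e2]) (use s2le that finS in auto)
        have beq: "\<beta> f = 1 \<or> \<beta> f = CARD('d)" if "f \<in> S" for f
          by (rule G7eq[OF that], rule sum_mono_inv[OF e3]) (use G7 that finS in auto)
        have abn: "real (\<alpha> f) * real (\<beta> f) = real n" if "f \<in> S" for f
        proof -
          have z: "(\<Sum>f\<in>S. ln (real n) - (ln (real (\<alpha> f)) + ln (real (\<beta> f)))) = 0"
            using e4 by (simp add: sum_subtractf n_def)
          have le: "(\<Sum>f\<in>S. 1 - real (\<alpha> f) * real (\<beta> f) / real n) \<le> (\<Sum>f\<in>S. ln (real n) - (ln (real (\<alpha> f)) + ln (real (\<beta> f))))"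
            by (rule sum_mono) (rule tf)
          have "1 - real (\<alpha> f) * real (\<beta> f) / real n = ln (real n) - (ln (real (\<alpha> f)) + ln (real (\<beta> f)))"
            by (rule sum_mono_inv[where I=S]) (use z le tsum tf that finS in auto)
          moreover have pa: "real (\<alpha> f) > 0" and pb: "real (\<beta> f) > 0" using \<alpha>1[OF that] G6[OF that] by auto
          ultimately have "ln (real n / (real (\<alpha> f) * real (\<beta> f))) = 1 - 1 / (real n / (real (\<alpha> f) * real (\<beta> f)))"
            using npos by (simp add: ln_div ln_mult)
          then have "real n / (real (\<alpha> f) * real (\<beta> f)) = 1"
            using npos pa pb by (intro ln_ge_one_minus_inv_eq) auto
          then show ?thesis using pa pb by (simp add: field_simps)
        qed
        have bd: "\<beta> f = CARD('d)" if "f \<in> S" for f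
        proof (rule ccontr)
          assume "\<beta> f \<noteq> CARD('d)"
          then have "\<beta> f = 1" using beq[OF that] by auto
          then have "card (A (f x)) = card S" using abn[OF that] by (simp add: \<alpha>_def n_def)
          then have "A (f x) = S" using card_seteq[OF finS AS[of "f x"]] by simp
          then have "f0 x = f x" "g0 x = f x" using f0 by (auto simp: A_def)
          then show False using f0 by simp
        qed
        have clos: "f(x := a) \<in> S" if "f \<in> S" for f a
        proof -
          have "line f = range (\<lambda>a. f(x := a))"
          proof (rule card_seteq)
            show "finite (range (\<lambda>a. f(x := a)))" by simp
            show "line f \<subseteq> range (\<lambda>a. f(x := a))" by (rule line_range)
            have "card (range (\<lambda>a. f(x := a))) \<le> CARD('d)" by (rule card_image_le) simp
            then show "card (range (\<lambda>a. f(x := a))) \<le> card (line f)"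
              using bd[OF that] by (simp add: \<beta>_def)
          qed
          then show ?thesis using lineS by blast
        qed
        have Ane: "1 \<le> card (A a)" for a
        proof -
          have "f0(x := a) \<in> A a" using clos[OF f0(1)] by (simp add: A_def)
          then show ?thesis using finA[of a] by (metis One_nat_def Suc_leI card_gt_0_iff empty_iff)
        qed
        have IHa: "\<exists>C h. finite C \<and> h \<in> A a \<and> A a = {g. \<forall>y. y \<notin> C \<longrightarrow> g y = h y} \<and> gb_edges_on (A a) \<subseteq> Ea a" for a
          using IH[OF Ane[of a]] Eaeq[of a] by blast
        have Ecfull: "{e\<in>Ec. f\<in>e} = (\<lambda>g. {f, g}) ` (line f - {f})" if "f \<in> S" for f
        proof (rule card_seteq)
          show "finite ((\<lambda>g. {f, g}) ` (line f - {f}))" using finline by simp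
          show "{e\<in>Ec. f\<in>e} \<subseteq> (\<lambda>g. {f, g}) ` (line f - {f})" by (rule G5[OF that])
          have "card ((\<lambda>g. {f, g}) ` (line f - {f})) \<le> card (line f - {f})"
            by (rule card_image_le) (use finline in auto)
          also have "\<dots> = \<beta> f - 1" using linef[OF that] finline by (simp add: \<beta>_def)
          also have "\<dots> = card {e\<in>Ec. f\<in>e}"
            using Eceq[OF that] G6[OF that] by (simp add: of_nat_diff)
          finally show "card ((\<lambda>g. {f, g}) ` (line f - {f})) \<le> card {e\<in>Ec. f\<in>e}" .
        qed
        obtain C h where Ch: "finite C" "h \<in> A (f0 x)" "A (f0 x) = {g. \<forall>y. y \<notin> C \<longrightarrow> g y = h y}"
          using IHa[of "f0 x"] by blast
        have hx: "h x = f0 x" using Ch(2) by (simp add: A_def)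
        show "\<exists>C h. finite C \<and> h \<in> S \<and> S = {g. \<forall>y. y \<notin> C \<longrightarrow> g y = h y} \<and> gb_edges_on S \<subseteq> E"
        proof (intro exI conjI)
          show "finite (insert x C)" using Ch(1) by simp
          show "h \<in> S" using Ch(2) AS by blast
          show "S = {g. \<forall>y. y \<notin> insert x C \<longrightarrow> g y = h y}"
          proof
            show "S \<subseteq> {g. \<forall>y. y \<notin> insert x C \<longrightarrow> g y = h y}"
            proof
              fix g assume "g \<in> S"
              then have "g(x := f0 x) \<in> A (f0 x)" using clos by (simp add: A_def)
              then have "\<forall>y. y \<notin> C \<longrightarrow> (g(x := f0 x)) y = h y" using Ch(3) by blast
              then show "g \<in> {g. \<forall>y. y \<notin> insert x C \<longrightarrow> g y = h y}" by auto
            qed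
            show "{g. \<forall>y. y \<notin> insert x C \<longrightarrow> g y = h y} \<subseteq> S"
            proof
              fix g assume "g \<in> {g. \<forall>y. y \<notin> insert x C \<longrightarrow> g y = h y}"
              then have "\<forall>y. y \<notin> C \<longrightarrow> (g(x := f0 x)) y = h y" using hx by auto
              then have "g(x := f0 x) \<in> A (f0 x)" using Ch(3) by blast
              then have "(g(x := f0 x))(x := g x) \<in> S" using AS clos by blast
              then show "g \<in> S" by simp
            qed
          qed
          show "gb_edges_on S \<subseteq> E"
          proof
            fix e assume eS: "e \<in> gb_edges_on S"
            obtain u v where uv: "e = {u, v}" "u \<in> S" "v \<in> S" "u \<noteq> v" "\<exists>!z. u z \<noteq> v z"
              "fin_supp u" "fin_supp v"
              using eS by (rule edge_dest) blast
            show "e \<in> E"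
            proof (cases "u x = v x")
              case True
              have adj: "gb_adj u v" using uv(5) by (simp add: gb_adj_def)
              have "u \<in> A (u x)" "v \<in> A (u x)" using uv True by (auto simp: A_def)
              then have "e \<in> gb_edges_on (A (u x))" unfolding gb_edges_on_def
                using uv adj by (intro CollectI exI[of _ u] exI[of _ v]) simp
              moreover have "gb_edges_on (A (u x)) \<subseteq> Ea (u x)" using IHa[of "u x"] by blast
              ultimately show ?thesis by (auto simp: Ea_def)
            next
              case False
              have agree: "\<forall>y. y \<noteq> x \<longrightarrow> u y = v y" using uv(5) False by blast
              then have "v \<in> line u - {u}" using uv by (auto simp: line_def)
              then have "{u, v} \<in> {e\<in>Ec. u\<in>e}" using Ecfull[OF uv(2)] by blast
              then show ?thesis using uv(1) by (simp add: Ec_def)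
            qed
          qed
        qed
      qed
    qed
  qed
qed


theorem mainTheorem6:
  fixes VX :: "(int \<Rightarrow> 'd::{finite, group_add}) set"
    and EdX :: "(int \<Rightarrow> 'd) set set"
  assumes "CARD('d) \<ge> 2"
    and "\<forall>f\<in>VX. fin_supp f"
    and "finite VX"
    and "card VX \<ge> 1"
    and "EdX \<subseteq> gb_edges_on VX"
  shows "real (card EdX) \<le> (real CARD('d) - 1) / 2 * real (card VX) * log (real CARD('d)) (real (card VX))
    \<and> (real (card EdX) = (real CARD('d) - 1) / 2 * real (card VX) * log (real CARD('d)) (real (card VX))
       \<longrightarrow> (\<exists>C h. finite C \<and> fin_supp h \<and>
              VX = {g. \<forall>x. x \<notin> C \<longrightarrow> g x = h x} \<and>
              gb_edges_on VX \<subseteq> EdX))"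
proof -
  define K where "K = (real CARD('d) - 1) / (2 * ln (real CARD('d)))"
  have eqK: "(real CARD('d) - 1) / 2 * real (card VX) * log (real CARD('d)) (real (card VX))
      = K * real (card VX) * ln (real (card VX))"
    unfolding K_def log_def by (simp add: field_simps)
  have M: "real (card EdX) \<le> K * real (card VX) * ln (real (card VX)) \<and>
    (real (card EdX) = K * real (card VX) * ln (real (card VX)) \<longrightarrow>
      (\<exists>C h. finite C \<and> h \<in> VX \<and> VX = {g. \<forall>y. y \<notin> C \<longrightarrow> g y = h y} \<and> gb_edges_on VX \<subseteq> EdX))"
    using main_ind[OF assms(1) K_def] assms(3,4,5) by blast
  show ?thesis
    unfolding eqK using M assms(2) by blast
qed

end
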